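(* Let $P\in\Delta_{\mathcal{T},\mathcal{X},\mathcal{Y}}$, let $Q^*$ be a minimizer of $I_Q(T:X\mid Y)$ over $Q\in\Delta_P$, and let $(t,x,y)\in\operatorname{supp}(\Delta_P)$. If $Q^*(t,x,y)=0$, then $Q^*(X=x,Y=y)=0$; consequently $Q^*(t',x,y)=0$ for all $t'\in\mathcal{T}$.
   Context: $T,X,Y$ are random variables with finite state spaces $\mathcal{T},\mathcal{X},\mathcal{Y}$; $\Delta_{\mathcal{T},\mathcal{X},\mathcal{Y}}$ is the set of all joint distributions on $\mathcal{T}\times\mathcal{X}\times\mathcal{Y}$. For $P\in\Delta_{\mathcal{T},\mathcal{X},\mathcal{Y}}$, $\Delta_P=\{Q\in\Delta_{\mathcal{T},\mathcal{X},\mathcal{Y}}: Q(X=x,T=t)=P(X=x,T=t),\ Q(Y=y,T=t)=P(Y=y,T=t)\ \forall x,y,t\}$ and $\operatorname{supp}(\Delta_P)=\bigcup_{Q\in\Delta_P}\operatorname{supp}(Q)$. $I_Q(T:X\mid Y)$ is the conditional mutual information under $Q$. *)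

theory Defs
  imports "HOL-Analysis.Analysis"
begin

definition distr :: "('t::finite \<times> 'x::finite \<times> 'y::finite \<Rightarrow> real) set" where
  "distr = {Q. (\<forall>z. 0 \<le> Q z) \<and> (\<Sum>z\<in>UNIV. Q z) = 1}"

definition margXT :: "('t::finite \<times> 'x::finite \<times> 'y::finite \<Rightarrow> real) \<Rightarrow> 'x \<Rightarrow> 't \<Rightarrow> real" where
  "margXT Q x t = (\<Sum>y\<in>UNIV. Q (t, x, y))"

definition margYT :: "('t::finite \<times> 'x::finite \<times> 'y::finite \<Rightarrow> real) \<Rightarrow> 'y \<Rightarrow> 't \<Rightarrow> real" where
  "margYT Q y t = (\<Sum>x\<in>UNIV. Q (t, x, y))"

definition margXY :: "('t::finite \<times> 'x::finite \<times> 'y::finite \<Rightarrow> real) \<Rightarrow> 'x \<Rightarrow> 'y \<Rightarrow> real" where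
  "margXY Q x y = (\<Sum>t\<in>UNIV. Q (t, x, y))"

definition margY :: "('t::finite \<times> 'x::finite \<times> 'y::finite \<Rightarrow> real) \<Rightarrow> 'y \<Rightarrow> real" where
  "margY Q y = (\<Sum>t\<in>UNIV. \<Sum>x\<in>UNIV. Q (t, x, y))"

definition DeltaP :: "('t::finite \<times> 'x::finite \<times> 'y::finite \<Rightarrow> real) \<Rightarrow> ('t \<times> 'x \<times> 'y \<Rightarrow> real) set" where
  "DeltaP P = {Q \<in> distr. (\<forall>x t. margXT Q x t = margXT P x t) \<and> (\<forall>y t. margYT Q y t = margYT P y t)}"

definition suppDeltaP :: "('t::finite \<times> 'x::finite \<times> 'y::finite \<Rightarrow> real) \<Rightarrow> ('t \<times> 'x \<times> 'y) set" where
  "suppDeltaP P = (\<Union>Q\<in>DeltaP P. {z. Q z \<noteq> 0})"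

definition condMI :: "('t::finite \<times> 'x::finite \<times> 'y::finite \<Rightarrow> real) \<Rightarrow> real" where
  "condMI Q = (\<Sum>(t,x,y)\<in>UNIV.
      if Q (t,x,y) = 0 then 0
      else Q (t,x,y) * log 2 ((Q (t,x,y) * margY Q y) / (margYT Q y t * margXY Q x y)))"

end

theory Submission
  imports Defs
begin

definition phi :: "real \<Rightarrow> real" where "phi u = u * log 2 u"

lemma tangent_ln:
  fixes A C :: real assumes "A > 0" "C \<ge> 0"
  shows "C * ln C \<ge> A * ln A + (ln A + 1) * (C - A)"
proof (cases "C = 0")
  case True then show ?thesis using assms by (simp add: algebra_simps)
next
  case False
  hence Cp: "C > 0" using assms by simp
  have "ln (A / C) \<le> A / C - 1" using ln_le_minus_one assms Cp by simp
  hence "C * ln (A/C) \<le> C * (A/C - 1)" using Cp by (simp add: mult_left_mono)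
  hence "C * (ln A - ln C) \<le> A - C" using Cp assms by (simp add: ln_div right_diff_distrib)
  thus ?thesis by (simp add: algebra_simps)
qed

lemma tangent_phi:
  fixes A C :: real assumes "A > 0" "C \<ge> 0"
  shows "phi C \<ge> phi A + (log 2 A + 1 / ln 2) * (C - A)"
proof -
  have l2: "ln 2 > (0::real)" by simp
  have "C * ln C / ln 2 \<ge> (A * ln A + (ln A + 1) * (C - A)) / ln 2"
    using tangent_ln[OF assms] l2 by (simp add: divide_right_mono)
  thus ?thesis unfolding phi_def log_def by (simp add: field_simps)
qed

lemma aff_id: fixes p d e a b :: real shows "(1-e) * (p + d * (a - ((1-e)*a + e*b))) + e * (p + d * (b - ((1-e)*a + e*b))) = p"
  by (simp add: algebra_simps)

lemma phi_convex:
  fixes a b e :: real assumes "a \<ge> 0" "b \<ge> 0" "0 \<le> e" "e \<le> 1"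
  shows "phi ((1-e)*a + e*b) \<le> (1-e) * phi a + e * phi b"
proof (cases "(1-e)*a + e*b = 0")
  case True
  have "(1-e)*a = 0" "e*b = 0" using True assms
    by (smt (verit) mult_nonneg_nonneg)+
  hence h: "(1-e) * phi a = 0" "e * phi b = 0" unfolding phi_def by auto
  have "phi ((1-e)*a+e*b) = 0" using True by (simp add: phi_def)
  thus ?thesis using h by linarith
next
  case False
  let ?c = "(1-e)*a + e*b"
  have cp: "?c > 0" using False assms by (smt (verit) mult_nonneg_nonneg)
  let ?d = "log 2 ?c + 1 / ln 2"
  have 1: "phi a \<ge> phi ?c + ?d * (a - ?c)" using tangent_phi[OF cp assms(1)] .
  have 2: "phi b \<ge> phi ?c + ?d * (b - ?c)" using tangent_phi[OF cp assms(2)] .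
  have "(1-e) * phi a + e * phi b \<ge> (1-e) * (phi ?c + ?d * (a - ?c)) + e * (phi ?c + ?d * (b - ?c))"
    using 1 2 assms by (intro add_mono mult_left_mono) auto
  also have "(1-e) * (phi ?c + ?d * (a - ?c)) + e * (phi ?c + ?d * (b - ?c)) = phi ?c"
    by (rule aff_id)
  finally show ?thesis .
qed

lemma phi_scale:
  fixes e u :: real assumes "e > 0" "u \<ge> 0"
  shows "phi (e*u) = e*u*log 2 e + e * phi u"
  using assms unfolding phi_def by (cases "u = 0") (auto simp: log_mult algebra_simps)

lemma sum_triple:
  "(\<Sum>z\<in>(UNIV::('a::finite \<times> 'b::finite \<times> 'c::finite) set). f z) = (\<Sum>t\<in>UNIV. \<Sum>x\<in>UNIV. \<Sum>y\<in>UNIV. f (t,x,y))"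
  by (simp add: sum.cartesian_product UNIV_Times_UNIV[symmetric] del: UNIV_Times_UNIV)

lemma swap3: "(\<Sum>t\<in>A. \<Sum>x\<in>B. \<Sum>y\<in>C. f t x y) = (\<Sum>x\<in>B. \<Sum>y\<in>C. \<Sum>t\<in>A. (f t x y :: real))"
proof -
  have "(\<Sum>t\<in>A. \<Sum>x\<in>B. \<Sum>y\<in>C. f t x y) = (\<Sum>x\<in>B. \<Sum>t\<in>A. \<Sum>y\<in>C. f t x y)" by (rule sum.swap)
  also have "\<dots> = (\<Sum>x\<in>B. \<Sum>y\<in>C. \<Sum>t\<in>A. f t x y)" by (rule sum.cong[OF refl], rule sum.swap)
  finally show ?thesis .
qed

lemma swapin: "(\<Sum>t\<in>A. \<Sum>x\<in>B. \<Sum>y\<in>C. f t x y) = (\<Sum>t\<in>A. \<Sum>y\<in>C. \<Sum>x\<in>B. (f t x y :: real))"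
  by (rule sum.cong[OF refl], rule sum.swap)

definition G :: "('t::finite \<times> 'x::finite \<times> 'y::finite \<Rightarrow> real) \<Rightarrow> real" where
  "G Q = (\<Sum>x\<in>UNIV. \<Sum>y\<in>UNIV. (\<Sum>t\<in>UNIV. phi (Q (t,x,y))) - phi (margXY Q x y))"

definition R :: "('t::finite \<times> 'x::finite \<times> 'y::finite \<Rightarrow> real) \<Rightarrow> real" where
  "R Q = (\<Sum>t\<in>UNIV. \<Sum>y\<in>UNIV. margYT Q y t * (log 2 (margY Q y) - log 2 (margYT Q y t)))"

lemma term_eq:
  fixes Q :: "'t::finite \<times> 'x::finite \<times> 'y::finite \<Rightarrow> real"
  assumes nn: "\<forall>z. 0 \<le> Q z"
  shows "(if Q (t,x,y) = 0 then 0
      else Q (t,x,y) * log 2 ((Q (t,x,y) * margY Q y) / (margYT Q y t * margXY Q x y)))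
    = phi (Q (t,x,y)) - Q (t,x,y) * log 2 (margXY Q x y) + Q (t,x,y) * (log 2 (margY Q y) - log 2 (margYT Q y t))"
proof (cases "Q (t,x,y) = 0")
  case True then show ?thesis by (simp add: phi_def)
next
  case False
  hence qp: "Q (t,x,y) > 0" using nn by (metis less_eq_real_def)
  have a: "Q (t,x,y) \<le> margYT Q y t" unfolding margYT_def
    by (rule member_le_sum[where f="\<lambda>x'. Q (t,x',y)", simplified]) (use nn in auto)
  have b: "Q (t,x,y) \<le> margXY Q x y" unfolding margXY_def
    by (rule member_le_sum[where f="\<lambda>t'. Q (t',x,y)", simplified]) (use nn in auto)
  have c: "margYT Q y t \<le> margY Q y" unfolding margY_def margYT_def
    by (rule member_le_sum[where f="\<lambda>t'. \<Sum>x\<in>UNIV. Q (t',x,y)", simplified]) (use nn in \<open>auto intro: sum_nonneg\<close>)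
  have p1: "margYT Q y t > 0" "margXY Q x y > 0" "margY Q y > 0" using a b c qp by linarith+
  show ?thesis using False p1 qp by (simp add: phi_def log_mult log_divide algebra_simps)
qed

lemma decomp:
  fixes Q :: "'t::finite \<times> 'x::finite \<times> 'y::finite \<Rightarrow> real"
  assumes nn: "\<forall>z. 0 \<le> Q z"
  shows "condMI Q = G Q + R Q"
proof -
  have "condMI Q = (\<Sum>t\<in>UNIV. \<Sum>x\<in>UNIV. \<Sum>y\<in>UNIV.
     phi (Q (t,x,y)) - Q (t,x,y) * log 2 (margXY Q x y) + Q (t,x,y) * (log 2 (margY Q y) - log 2 (margYT Q y t)))"
    unfolding condMI_def sum_triple using term_eq[OF nn] by simp
  also have "\<dots> = (\<Sum>t\<in>UNIV. \<Sum>x\<in>UNIV. \<Sum>y\<in>UNIV. phi (Q (t,x,y)))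
       - (\<Sum>t\<in>UNIV. \<Sum>x\<in>UNIV. \<Sum>y\<in>UNIV. Q (t,x,y) * log 2 (margXY Q x y))
       + (\<Sum>t\<in>UNIV. \<Sum>x\<in>UNIV. \<Sum>y\<in>UNIV. Q (t,x,y) * (log 2 (margY Q y) - log 2 (margYT Q y t)))"
    by (simp add: sum.distrib sum_subtractf)
  also have "(\<Sum>t\<in>UNIV. \<Sum>x\<in>UNIV. \<Sum>y\<in>UNIV. phi (Q (t,x,y)))
      = (\<Sum>x\<in>UNIV. \<Sum>y\<in>UNIV. \<Sum>t\<in>UNIV. phi (Q (t,x,y)))"
    by (rule swap3)
  also have "(\<Sum>t\<in>UNIV. \<Sum>x\<in>UNIV. \<Sum>y\<in>UNIV. Q (t,x,y) * log 2 (margXY Q x y))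
      = (\<Sum>x\<in>UNIV. \<Sum>y\<in>UNIV. phi (margXY Q x y))"
  proof -
    have "(\<Sum>t\<in>UNIV. \<Sum>x\<in>UNIV. \<Sum>y\<in>UNIV. Q (t,x,y) * log 2 (margXY Q x y))
       = (\<Sum>x\<in>UNIV. \<Sum>y\<in>UNIV. \<Sum>t\<in>UNIV. Q (t,x,y) * log 2 (margXY Q x y))"
      by (rule swap3)
    also have "\<dots> = (\<Sum>x\<in>UNIV. \<Sum>y\<in>UNIV. phi (margXY Q x y))"
      unfolding phi_def margXY_def by (simp add: sum_distrib_right)
    finally show ?thesis .
  qed
  also have "(\<Sum>t\<in>UNIV. \<Sum>x\<in>UNIV. \<Sum>y\<in>UNIV. Q (t,x,y) * (log 2 (margY Q y) - log 2 (margYT Q y t)))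
      = R Q"
  proof -
    have "(\<Sum>t\<in>UNIV. \<Sum>x\<in>UNIV. \<Sum>y\<in>UNIV. Q (t,x,y) * (log 2 (margY Q y) - log 2 (margYT Q y t)))
      = (\<Sum>t\<in>UNIV. \<Sum>y\<in>UNIV. \<Sum>x\<in>UNIV. Q (t,x,y) * (log 2 (margY Q y) - log 2 (margYT Q y t)))"
      by (rule swapin)
    also have "\<dots> = R Q"
      unfolding R_def margYT_def by (simp add: sum_distrib_right)
    finally show ?thesis .
  qed
  finally show ?thesis unfolding G_def by (simp add: sum_subtractf)
qed

definition H :: "('t::finite \<Rightarrow> real) \<Rightarrow> real" where
  "H v = (\<Sum>t\<in>UNIV. phi (v t)) - phi (\<Sum>t\<in>UNIV. v t)"

definition K :: "('t::finite \<Rightarrow> real) \<Rightarrow> ('t \<Rightarrow> real) \<Rightarrow> real" where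
  "K a b = (if sum a UNIV = 0 then H b
     else (\<Sum>t\<in>UNIV. phi (b t) - phi (a t)) - (log 2 (sum a UNIV) + 1 / ln 2) * (sum b UNIV - sum a UNIV))"

lemma phi0[simp]: "phi 0 = 0" by (simp add: phi_def)

lemma block:
  fixes a b :: "'t::finite \<Rightarrow> real" and e :: real
  assumes an: "\<forall>t. 0 \<le> a t" and bn: "\<forall>t. 0 \<le> b t" and e0: "0 < e" and e1: "e < 1"
  shows "H (\<lambda>t. (1-e) * a t + e * b t) - H a
     \<le> e * K a b + (if a t0 = 0 \<and> 0 < sum a UNIV then e * b t0 * log 2 e else 0)"
proof (cases "sum a UNIV = 0")
  case True
  hence a0: "\<forall>t. a t = 0" using an by (simp add: sum_nonneg_eq_0_iff)
  have "H (\<lambda>t. (1-e) * a t + e * b t) = H (\<lambda>t. e * b t)" using a0 by simp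
  also have "\<dots> = (\<Sum>t\<in>UNIV. e * b t * log 2 e + e * phi (b t)) - (e * sum b UNIV * log 2 e + e * phi (sum b UNIV))"
    unfolding H_def using phi_scale[OF e0] bn
    by (simp add: sum_distrib_left[symmetric] sum_nonneg)
  also have "\<dots> = e * H b"
    unfolding H_def by (simp add: sum.distrib sum_distrib_left sum_distrib_right algebra_simps)
  finally show ?thesis using True a0 by (simp add: K_def H_def)
next
  case False
  hence Ap: "sum a UNIV > 0" using an by (metis less_eq_real_def sum_nonneg)
  let ?A = "sum a UNIV" and ?B = "sum b UNIV"
  let ?c = "\<lambda>t. (1-e) * a t + e * b t"
  let ?f = "\<lambda>t. e * (phi (b t) - phi (a t)) + (if t = t0 \<and> a t0 = 0 then e * b t0 * log 2 e else 0)"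
  have pt: "phi (?c t) - phi (a t) \<le> ?f t" for t
  proof (cases "t = t0 \<and> a t0 = 0")
    case True
    then show ?thesis using phi_scale[OF e0, of "b t0"] bn by (simp add: algebra_simps)
  next
    case False
    have "phi (?c t) \<le> (1-e) * phi (a t) + e * phi (b t)"
      using phi_convex[of "a t" "b t" e] an bn e0 e1 by simp
    moreover have "?f t = e * (phi (b t) - phi (a t))" using False by (simp only: if_not_P) simp
    ultimately show ?thesis by (simp add: algebra_simps)
  qed
  have s1: "(\<Sum>t\<in>UNIV. phi (?c t)) - (\<Sum>t\<in>UNIV. phi (a t)) \<le> sum ?f UNIV"
    using sum_mono[of UNIV "\<lambda>t. phi (?c t) - phi (a t)" ?f] pt by (simp add: sum_subtractf)
  have s1': "sum ?f UNIV = e * (\<Sum>t\<in>UNIV. phi (b t) - phi (a t)) + (if a t0 = 0 then e * b t0 * log 2 e else 0)"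
    by (simp add: sum.distrib sum_distrib_left)
  have Cs: "sum ?c UNIV = (1-e) * ?A + e * ?B" by (simp add: sum.distrib sum_distrib_left)
  have Cn: "sum ?c UNIV \<ge> 0" using an bn e0 e1 by (intro sum_nonneg) (simp add: less_imp_le)
  have s2: "phi (sum ?c UNIV) \<ge> phi ?A + (log 2 ?A + 1 / ln 2) * (sum ?c UNIV - ?A)"
    by (rule tangent_phi[OF Ap Cn])
  have s2': "sum ?c UNIV - ?A = e * (?B - ?A)" using Cs by (simp add: algebra_simps)
  let ?d = "log 2 ?A + 1 / ln 2"
  let ?I = "(if a t0 = 0 then e * b t0 * log 2 e else 0)"
  have s3: "?d * (sum ?c UNIV - ?A) = e * (?d * (?B - ?A))" using s2' by simp
  have L: "H ?c - H a \<le> e * ((\<Sum>t\<in>UNIV. phi (b t) - phi (a t)) - ?d * (?B - ?A)) + ?I"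
    unfolding H_def using s1 s1' s2 s3 by (simp only: right_diff_distrib; linarith)
  have "(if a t0 = 0 \<and> 0 < sum a UNIV then e * b t0 * log 2 e else 0) = ?I" using Ap by simp
  moreover have "K a b = (\<Sum>t\<in>UNIV. phi (b t) - phi (a t)) - ?d * (?B - ?A)" using False by (simp add: K_def)
  ultimately show ?thesis using L by simp
qed

lemma G_H: "G Q = (\<Sum>x\<in>UNIV. \<Sum>y\<in>UNIV. H (\<lambda>t. Q (t,x,y)))"
  unfolding G_def H_def margXY_def by simp

lemma margY_YT: "margY Q y = (\<Sum>t\<in>UNIV. margYT Q y t)"
  unfolding margY_def margYT_def by simp

lemma R_eq:
  assumes "\<forall>y t. margYT Q1 y t = margYT Q2 y t"
  shows "R Q1 = R Q2"
  unfolding R_def margY_YT using assms by simp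

lemma mix_in:
  assumes "Q1 \<in> DeltaP P" "Q2 \<in> DeltaP P" "0 \<le> e" "e \<le> 1"
  shows "(\<lambda>z. (1-e) * Q1 z + e * Q2 z) \<in> DeltaP P"
proof -
  have d1: "\<forall>z. 0 \<le> Q1 z" "(\<Sum>z\<in>UNIV. Q1 z) = 1" and d2: "\<forall>z. 0 \<le> Q2 z" "(\<Sum>z\<in>UNIV. Q2 z) = 1"
    using assms(1,2) by (auto simp: DeltaP_def distr_def)
  have m1: "\<forall>x t. margXT Q1 x t = margXT P x t" "\<forall>y t. margYT Q1 y t = margYT P y t"
   and m2: "\<forall>x t. margXT Q2 x t = margXT P x t" "\<forall>y t. margYT Q2 y t = margYT P y t"
    using assms(1,2) by (auto simp: DeltaP_def)
  have "\<forall>z. 0 \<le> (1-e) * Q1 z + e * Q2 z" using d1 d2 assms(3,4) by simp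
  moreover have "(\<Sum>z\<in>UNIV. (1-e) * Q1 z + e * Q2 z) = 1"
    using d1 d2 by (simp add: sum.distrib sum_distrib_left[symmetric])
  moreover have "margXT (\<lambda>z. (1-e) * Q1 z + e * Q2 z) x t = margXT P x t" for x t
  proof -
    have "margXT (\<lambda>z. (1-e) * Q1 z + e * Q2 z) x t = (1-e) * margXT Q1 x t + e * margXT Q2 x t"
      unfolding margXT_def by (simp add: sum.distrib sum_distrib_left)
    thus ?thesis using m1 m2 by (simp add: algebra_simps)
  qed
  moreover have "margYT (\<lambda>z. (1-e) * Q1 z + e * Q2 z) y t = margYT P y t" for y t
  proof -
    have "margYT (\<lambda>z. (1-e) * Q1 z + e * Q2 z) y t = (1-e) * margYT Q1 y t + e * margYT Q2 y t"
      unfolding margYT_def by (simp add: sum.distrib sum_distrib_left)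
    thus ?thesis using m1 m2 by (simp add: algebra_simps)
  qed
  ultimately show ?thesis by (simp add: DeltaP_def distr_def)
qed

lemma sum_le_single:
  fixes f :: "'a::finite \<Rightarrow> real"
  assumes "\<forall>i. f i \<le> 0"
  shows "sum f UNIV \<le> f i"
proof -
  have "(\<Sum>j\<in>UNIV. - f j) \<ge> - f i"
    by (rule member_le_sum) (use assms in auto)
  thus ?thesis by (simp add: sum_negf)
qed

theorem mainTheorem5:
  fixes P Qs :: "'t::finite \<times> 'x::finite \<times> 'y::finite \<Rightarrow> real"
    and t :: 't and x :: 'x and y :: 'y
  assumes "P \<in> distr"
    and "Qs \<in> DeltaP P"
    and "\<forall>Q\<in>DeltaP P. condMI Qs \<le> condMI Q"
    and "(t, x, y) \<in> suppDeltaP P"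
    and "Qs (t, x, y) = 0"
  shows "margXY Qs x y = 0 \<and> (\<forall>t'. Qs (t', x, y) = 0)"
proof -
  obtain Q' where Q': "Q' \<in> DeltaP P" "Q' (t,x,y) \<noteq> 0"
    using assms(4) unfolding suppDeltaP_def by auto
  have nQs: "\<forall>z. 0 \<le> Qs z" using assms(2) by (simp add: DeltaP_def distr_def)
  have nQ': "\<forall>z. 0 \<le> Q' z" using Q'(1) by (simp add: DeltaP_def distr_def)
  have b0: "Q' (t,x,y) > 0" using nQ' Q'(2) by (metis less_eq_real_def)
  have M: "margXY Qs x y = 0"
  proof (rule ccontr)
    assume "margXY Qs x y \<noteq> 0"
    hence Mp: "margXY Qs x y > 0" using nQs unfolding margXY_def by (metis less_eq_real_def sum_nonneg)
    define a where "a = (\<lambda>x' y' t'. Qs (t',x',y'))"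
    define b where "b = (\<lambda>x' y' t'. Q' (t',x',y'))"
    define K0 where "K0 = (\<Sum>x'\<in>UNIV. \<Sum>y'\<in>UNIV. K (a x' y') (b x' y'))"
    define bb where "bb = Q' (t,x,y)"
    define e :: real where "e = 2 powr (- (\<bar>K0\<bar> + 1) / bb)"
    have bbp: "bb > 0" using b0 bb_def by simp
    have e0: "e > 0" unfolding e_def by simp
    have e1: "e < 1" unfolding e_def using bbp
      by (intro powr_less_one) (auto simp: divide_neg_pos)
    have le: "log 2 e = - (\<bar>K0\<bar> + 1) / bb" unfolding e_def by simp
    define Qe where "Qe = (\<lambda>z. (1-e) * Qs z + e * Q' z)"
    have Qe_in: "Qe \<in> DeltaP P" unfolding Qe_def using mix_in[OF assms(2) Q'(1)] e0 e1 by simp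
    have nQe: "\<forall>z. 0 \<le> Qe z" using Qe_in by (simp add: DeltaP_def distr_def)
    have mQe: "\<forall>y t. margYT Qe y t = margYT Qs y t"
      using Qe_in assms(2) by (simp add: DeltaP_def)
    define I where "I = (\<lambda>x' y'. if a x' y' t = 0 \<and> 0 < sum (a x' y') UNIV then e * b x' y' t * log 2 e else 0)"
    have blk: "H (\<lambda>t'. Qe (t',x',y')) - H (\<lambda>t'. Qs (t',x',y')) \<le> e * K (a x' y') (b x' y') + I x' y'" for x' y'
      using block[of "a x' y'" "b x' y'" e t] nQs nQ' e0 e1 unfolding I_def a_def b_def Qe_def by simp
    have "G Qe - G Qs = (\<Sum>x'\<in>UNIV. \<Sum>y'\<in>UNIV. H (\<lambda>t'. Qe (t',x',y')) - H (\<lambda>t'. Qs (t',x',y')))"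
      unfolding G_H by (simp add: sum_subtractf)
    also have "\<dots> \<le> (\<Sum>x'\<in>UNIV. \<Sum>y'\<in>UNIV. e * K (a x' y') (b x' y') + I x' y')"
      by (intro sum_mono blk)
    also have "\<dots> = e * K0 + (\<Sum>x'\<in>UNIV. \<Sum>y'\<in>UNIV. I x' y')"
      unfolding K0_def by (simp add: sum.distrib sum_distrib_left)
    also have "(\<Sum>x'\<in>UNIV. \<Sum>y'\<in>UNIV. I x' y') \<le> I x y"
    proof -
      have Inp: "I x' y' \<le> 0" for x' y'
      proof -
        have "log 2 e < 0" using e0 e1 by simp
        moreover have "b x' y' t \<ge> 0" using nQ' b_def by simp
        ultimately show ?thesis unfolding I_def using e0
          by (simp add: mult_nonneg_nonpos mult_nonpos_nonneg)
      qed
      have "(\<Sum>x'\<in>UNIV. \<Sum>y'\<in>UNIV. I x' y') \<le> (\<Sum>y'\<in>UNIV. I x y')"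
        by (rule sum_le_single) (auto intro: sum_nonpos Inp)
      also have "\<dots> \<le> I x y" by (rule sum_le_single) (auto intro: Inp)
      finally show ?thesis .
    qed
    also have "I x y = e * bb * log 2 e"
      unfolding I_def a_def b_def bb_def using assms(5) Mp unfolding margXY_def by simp
    finally have "G Qe - G Qs \<le> e * K0 + e * bb * log 2 e" by simp
    also have "e * K0 + e * bb * log 2 e = e * (K0 - (\<bar>K0\<bar> + 1))"
    proof -
      have h: "bb * log 2 e = -(\<bar>K0\<bar> + 1)" using le bbp by simp
      have "e * K0 + e * bb * log 2 e = e * K0 + e * (bb * log 2 e)" by (simp add: mult.assoc)
      also have "\<dots> = e * (K0 - (\<bar>K0\<bar> + 1))" unfolding h by (simp add: algebra_simps)
      finally show ?thesis .
    qed
    also have "\<dots> < 0" using e0 by (simp add: mult_pos_neg)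
    finally have "G Qe < G Qs" by simp
    hence "condMI Qe < condMI Qs"
      using decomp[OF nQe] decomp[OF nQs] R_eq[OF mQe] by simp
    thus False using assms(3) Qe_in by force
  qed
  have "\<forall>t'. Qs (t', x, y) = 0"
    using M nQs unfolding margXY_def by (simp add: sum_nonneg_eq_0_iff)
  thus ?thesis using M by simp
qed

end
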